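(* For any myopic equilibrium $\mathbf{s}$ of a $k$-round Funding Game with bundle sizes $m^1,\dots,m^k$, we have for each $t\in\{1,\dots,k\}$: $$\Delta^t \;\ge\; \frac{sw(\mathbf{s}^t)}{m^t} \;\ge\; \Delta^{t+1}.$$
   Context: Players $1,\dots,n$ have valuation functions $v_i:\{0,\dots,m\}\to\mathbb{R}_{\ge0}$ with $v_i(0)=0$, nondecreasing, with diminishing marginal returns $v_i(x)-v_i(x-1)\ge v_i(x+1)-v_i(x)$. A (single-round) Funding Game with $M$ items and such valuations $w_i$: each player submits a request $(x_i,\tilde v_i)$ with $x_i\in\{0,\dots,M\}$ and $0\le \tilde v_i\le w_i(x_i)$; the Highest Ratio Greedy mechanism considers requests in descending order of $\tilde v_i/x_i$ (ties in favor of lower index) and grants each in turn $\min(x_i,\text{items still available})$ items; payoff is $w_i$ of the number of items received; a Nash equilibrium is a request profile where no player can increase its payoff by changing its own valid request. A $k$-round Funding Game with bundle sizes $m^1,\dots,m^k$ (positive integers, $\sum_t m^t=m$) consists of rounds $t=1,\dots,k$; in round $t$ a single-round Funding Game $G^t$ is played with $m^t$ items and marginal valuations $v_i^t(x)=v_i(x+\alpha_i^{t-1})-v_i(\alpha_i^{t-1})$, where $X_i^t$ is the number of items player $i$ receives in round $t$ and $\alpha_i^t=\sum_{j\le t}X_i^j$, $\alpha_i^0=0$. $\mathbf{s}^t$ is the request profile in round $t$ and $\mathbf{s}=(\mathbf{s}^1,\dots,\mathbf{s}^k)$. $\mathbf{s}$ is a myopic equilibrium if each $\mathbf{s}^t$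 is a Nash equilibrium of $G^t$. $sw(\mathbf{s}^t)=\sum_i v_i^t(X_i^t)$, $sw(\mathbf{s})=\sum_i v_i(\alpha_i^k)$, and $\Delta^t=\max_i v_i^t(1)$ for $t=1,\dots,k+1$ (with $v_i^{k+1}(x)=v_i(x+\alpha_i^k)-v_i(\alpha_i^k)$). *)

theory Defs
  imports Complex_Main "HOL-Library.Product_Lexorder"
begin

text \<open>Players are indexed 0,...,n-1 (the paper's 1,...,n; the tie-breaking
  "lower index first" is preserved). A request is a pair (x, v') :: nat \<times> real.\<close>

type_synonym request = "nat \<times> real"

definition ratio :: "request \<Rightarrow> real" where
  "ratio r = snd r / real (fst r)"

definition hrg_order :: "nat \<Rightarrow> (nat \<Rightarrow> request) \<Rightarrow> nat list" where
  "hrg_order n s = sort_key (\<lambda>i. (- ratio (s i), i)) [0..<n]"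

fun grant :: "(nat \<Rightarrow> nat) \<Rightarrow> nat list \<Rightarrow> nat \<Rightarrow> (nat \<Rightarrow> nat)" where
  "grant x [] r = (\<lambda>_. 0)"
| "grant x (i # is) r = (grant x is (r - min (x i) r))(i := min (x i) r)"

definition hrg_alloc :: "nat \<Rightarrow> nat \<Rightarrow> (nat \<Rightarrow> request) \<Rightarrow> nat \<Rightarrow> nat" where
  "hrg_alloc n M s = grant (\<lambda>i. fst (s i)) (hrg_order n s) M"

definition valid_request :: "nat \<Rightarrow> (nat \<Rightarrow> real) \<Rightarrow> request \<Rightarrow> bool" where
  "valid_request M wi r \<longleftrightarrow> fst r \<le> M \<and> 0 \<le> snd r \<and> snd r \<le> wi (fst r)"

definition nash_eq :: "nat \<Rightarrow> nat \<Rightarrow> (nat \<Rightarrow> nat \<Rightarrow> real) \<Rightarrow> (nat \<Rightarrow> request) \<Rightarrow> bool" where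
  "nash_eq n M w s \<longleftrightarrow>
     (\<forall>i<n. valid_request M (w i) (s i)) \<and>
     (\<forall>i<n. \<forall>r. valid_request M (w i) r \<longrightarrow>
        w i (hrg_alloc n M (s(i := r)) i) \<le> w i (hrg_alloc n M s i))"

definition valuation :: "nat \<Rightarrow> (nat \<Rightarrow> real) \<Rightarrow> bool" where
  "valuation m f \<longleftrightarrow> f 0 = 0 \<and> (\<forall>x\<le>m. 0 \<le> f x)
     \<and> (\<forall>x. x + 1 \<le> m \<longrightarrow> f x \<le> f (x + 1))
     \<and> (\<forall>x. 1 \<le> x \<and> x + 1 \<le> m \<longrightarrow> f x - f (x - 1) \<ge> f (x + 1) - f x)"

text \<open>Valuations are only given on {0..m}; we extend them constantly beyond m
  (there are no further items), which only matters for Delta^{k+1}.\<close>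
definition vtrunc :: "nat \<Rightarrow> (nat \<Rightarrow> nat \<Rightarrow> real) \<Rightarrow> nat \<Rightarrow> nat \<Rightarrow> real" where
  "vtrunc m v i x = v i (min x m)"

text \<open>k-round game: bundle sizes mb 1, ..., mb k; S t is the request profile of round t.\<close>
definition X :: "nat \<Rightarrow> (nat \<Rightarrow> nat) \<Rightarrow> (nat \<Rightarrow> nat \<Rightarrow> request) \<Rightarrow> nat \<Rightarrow> nat \<Rightarrow> nat" where
  "X n mb S t i = hrg_alloc n (mb t) (S t) i"

fun alpha :: "nat \<Rightarrow> (nat \<Rightarrow> nat) \<Rightarrow> (nat \<Rightarrow> nat \<Rightarrow> request) \<Rightarrow> nat \<Rightarrow> nat \<Rightarrow> nat" where
  "alpha n mb S 0 i = 0"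
| "alpha n mb S (Suc t) i = alpha n mb S t i + X n mb S (Suc t) i"

definition vmarg :: "nat \<Rightarrow> nat \<Rightarrow> (nat \<Rightarrow> nat \<Rightarrow> real) \<Rightarrow> (nat \<Rightarrow> nat)
    \<Rightarrow> (nat \<Rightarrow> nat \<Rightarrow> request) \<Rightarrow> nat \<Rightarrow> nat \<Rightarrow> nat \<Rightarrow> real" where
  "vmarg n m v mb S t i x =
     vtrunc m v i (x + alpha n mb S (t - 1) i) - vtrunc m v i (alpha n mb S (t - 1) i)"

definition myopic_eq :: "nat \<Rightarrow> nat \<Rightarrow> nat \<Rightarrow> (nat \<Rightarrow> nat \<Rightarrow> real) \<Rightarrow> (nat \<Rightarrow> nat)
    \<Rightarrow> (nat \<Rightarrow> nat \<Rightarrow> request) \<Rightarrow> bool" where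
  "myopic_eq n m k v mb S \<longleftrightarrow>
     (\<forall>t\<in>{1..k}. nash_eq n (mb t) (vmarg n m v mb S t) (S t))"

definition sw_round :: "nat \<Rightarrow> nat \<Rightarrow> (nat \<Rightarrow> nat \<Rightarrow> real) \<Rightarrow> (nat \<Rightarrow> nat)
    \<Rightarrow> (nat \<Rightarrow> nat \<Rightarrow> request) \<Rightarrow> nat \<Rightarrow> real" where
  "sw_round n m v mb S t = (\<Sum>i<n. vmarg n m v mb S t i (X n mb S t i))"

definition Delta :: "nat \<Rightarrow> nat \<Rightarrow> (nat \<Rightarrow> nat \<Rightarrow> real) \<Rightarrow> (nat \<Rightarrow> nat)
    \<Rightarrow> (nat \<Rightarrow> nat \<Rightarrow> request) \<Rightarrow> nat \<Rightarrow> real" where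
  "Delta n m v mb S t = Max ((\<lambda>i. vmarg n m v mb S t i 1) ` {..<n})"

end

theory Submission
  imports Defs
begin

definition cv :: "(nat \<Rightarrow> real) \<Rightarrow> bool" where
  "cv f \<longleftrightarrow> f 0 = 0 \<and> (\<forall>x. f x \<le> f (Suc x)) \<and>
     (\<forall>x. f (Suc (Suc x)) - f (Suc x) \<le> f (Suc x) - f x)"

lemma cv_mono: assumes "cv f" "a \<le> b" shows "f a \<le> f b"
  using assms(2)
proof (induction b rule: dec_induct)
  case base then show ?case by simp
next
  case (step k) then show ?case using assms(1) unfolding cv_def by (meson order_trans)
qed

lemma cv_nonneg: "cv f \<Longrightarrow> 0 \<le> f a"
  using cv_mono[of f 0 a] unfolding cv_def by simp

lemma cv_marg: assumes "cv f" "a \<le> b" shows "f (Suc b) - f b \<le> f (Suc a) - f a"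
  using assms(2)
proof (induction b rule: dec_induct)
  case base then show ?case by simp
next
  case (step k) then show ?case using assms(1) unfolding cv_def
    by (metis order_trans)
qed

lemma cv_lower: assumes "cv f" "y \<le> z" shows "real y * (f (Suc z) - f z) \<le> f y"
  using assms(2)
proof (induction y)
  case 0 then show ?case using assms(1) by (simp add: cv_def)
next
  case (Suc y)
  have "f (Suc z) - f z \<le> f (Suc y) - f y" using cv_marg[OF assms(1)] Suc by simp
  then show ?case using Suc by (simp add: algebra_simps)
qed

lemma cv_upper: assumes "cv f" shows "f x \<le> real x * f 1"
proof (induction x)
  case 0 then show ?case using assms by (simp add: cv_def)
next
  case (Suc x)
  have "f (Suc x) - f x \<le> f (Suc 0) - f 0" using cv_marg[OF assms, of 0 x] by simp
  then show ?case using Suc assms by (simp add: cv_def algebra_simps)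
qed

lemma cv_avg: assumes "cv f" "1 \<le> y" "y \<le> x" shows "f x / real x \<le> f y / real y"
  using assms(3)
proof (induction x rule: dec_induct)
  case base then show ?case by simp
next
  case (step k)
  have k: "1 \<le> k" using step assms by simp
  have "real k * (f (Suc k) - f k) \<le> f k" using cv_lower[OF assms(1), of k k] by simp
  hence "f (Suc k) * real k \<le> f k * real (Suc k)" by (simp add: algebra_simps)
  hence "f (Suc k) / real (Suc k) \<le> f k / real k" using k
    by (simp add: divide_simps)
  then show ?case using step by linarith
qed

lemma cv_prop: assumes "cv f" "Z \<le> x" "d * real x \<le> f x" shows "d * real Z \<le> f Z"
proof (cases "Z = 0")
  case True then show ?thesis using assms(1) by (simp add: cv_def)
next
  case False
  have "f x / real x \<le> f Z / real Z" using cv_avg[OF assms(1), of Z x] False assms(2) by simp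
  moreover have "d \<le> f x / real x" using assms False by (simp add: pos_le_divide_eq)
  ultimately have "d \<le> f Z / real Z" by linarith
  then show ?thesis using False by (simp add: pos_le_divide_eq mult.commute)
qed

lemma valuation_cv:
  assumes "valuation m v"
  shows "cv (\<lambda>x. v (min (x + a) m) - v (min a m))"
proof -
  define g where "g y = v (min y m)" for y
  have g0: "g 0 = 0" using assms by (simp add: g_def valuation_def)
  have gs: "g y \<le> g (Suc y)" for y
  proof (cases "Suc y \<le> m")
    case True then show ?thesis using assms unfolding g_def valuation_def by (simp add: min_def)
  next
    case False
    then have "min y m = m" by (simp add: min_def)
    then show ?thesis using False by (simp add: g_def min_def)
  qed
  have gc: "g (Suc (Suc y)) - g (Suc y) \<le> g (Suc y) - g y" for y
  proof -
    consider "Suc (Suc y) \<le> m" | "Suc y = m" | "m \<le> y" by linarith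
    then show ?thesis
    proof cases
      case 1
      have "v (y + 1) - v (y + 1 - 1) \<ge> v (y + 1 + 1) - v (y + 1)"
        using assms 1 unfolding valuation_def by (metis le_add2 Suc_eq_plus1)
      then show ?thesis using 1 by (simp add: g_def min_def)
    next
      case 2
      have "v y \<le> v (Suc y)" using assms 2 unfolding valuation_def by auto
      then show ?thesis using 2 by (simp add: g_def min_def)
    next
      case 3 then show ?thesis by (simp add: g_def min_def)
    qed
  qed
  show ?thesis unfolding cv_def
    using g0 gs[of "_ + a"] gc[of "_ + a"] by (simp add: g_def[symmetric])
qed


lemma grant_notin: "i \<notin> set L \<Longrightarrow> grant x L r i = 0"
  by (induction L arbitrary: r) auto

lemma grant_le: "grant x L r i \<le> x i"
  by (induction L arbitrary: r) auto

lemma grant_sum: "distinct L \<Longrightarrow> (\<Sum>i\<in>set L. grant x L r i) = min r (\<Sum>i\<in>set L. x i)"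
proof (induction L arbitrary: r)
  case Nil then show ?case by simp
next
  case (Cons a L)
  have "(\<Sum>i\<in>set (a # L). grant x (a # L) r i)
      = min (x a) r + (\<Sum>i\<in>set L. grant x L (r - min (x a) r) i)"
    using Cons.prems by (simp add: sum.insert_remove) (rule sum.cong, auto)
  also have "\<dots> = min (x a) r + min (r - min (x a) r) (\<Sum>i\<in>set L. x i)"
    using Cons by simp
  also have "\<dots> = min r (\<Sum>i\<in>set (a#L). x i)" using Cons.prems by auto
  finally show ?case .
qed

lemma grant_app: "distinct (A @ B) \<Longrightarrow> i \<in> set A \<Longrightarrow> grant x (A @ B) r i = grant x A r i"
  by (induction A arbitrary: r) auto

lemma grant_prefix: "distinct (A @ B) \<Longrightarrow>
   (\<Sum>i\<in>set A. grant x (A @ B) r i) = min r (\<Sum>i\<in>set A. x i)"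
  using grant_sum[of A x r] grant_app[of A B _ x r] by simp

lemma sorted_split:
  assumes "sorted (map f L)" "\<forall>a b. f a \<le> f b \<longrightarrow> Q b \<longrightarrow> Q a"
  shows "L = filter Q L @ filter (\<lambda>i. \<not> Q i) L"
  using assms(1)
proof (induction L)
  case Nil then show ?case by simp
next
  case (Cons a L)
  show ?case
  proof (cases "Q a")
    case True then show ?thesis using Cons by simp
  next
    case False
    have "\<forall>b\<in>set L. \<not> Q b" using Cons.prems False assms(2) by auto
    then show ?thesis using False by (simp add: filter_id_conv)
  qed
qed

definition key :: "(nat \<Rightarrow> request) \<Rightarrow> nat \<Rightarrow> real \<times> nat" where
  "key s i = (- ratio (s i), i)"

lemma hrg_set: "set (hrg_order n s) = {..<n}" and hrg_distinct: "distinct (hrg_order n s)"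
  by (auto simp: hrg_order_def)

lemma alloc_le: "hrg_alloc n M s i \<le> fst (s i)"
  using grant_le[of "\<lambda>i. fst (s i)"] by (simp add: hrg_alloc_def)

lemma alloc_sum: "(\<Sum>i<n. hrg_alloc n M s i) \<le> M"
  using grant_sum[OF hrg_distinct, of "\<lambda>i. fst (s i)" n s M]
  by (simp add: hrg_alloc_def hrg_set)

lemma prefix_sum:
  assumes "\<forall>a b. key s a \<le> key s b \<longrightarrow> Q b \<longrightarrow> Q a"
  shows "(\<Sum>i\<in>{i. i < n \<and> Q i}. hrg_alloc n M s i) = min M (\<Sum>i\<in>{i. i < n \<and> Q i}. fst (s i))"
proof -
  let ?L = "hrg_order n s"
  have srt: "sorted (map (key s) ?L)"
    unfolding hrg_order_def key_def by (rule sorted_sort_key)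
  have sp: "?L = filter Q ?L @ filter (\<lambda>i. \<not> Q i) ?L"
    by (rule sorted_split[OF srt assms])
  have st: "set (filter Q ?L) = {i. i < n \<and> Q i}" by (auto simp: hrg_set)
  have d: "distinct (filter Q ?L @ filter (\<lambda>i. \<not> Q i) ?L)" using sp hrg_distinct by metis
  show ?thesis
    using grant_prefix[OF d, of "\<lambda>i. fst (s i)" M] sp st
    unfolding hrg_alloc_def by simp
qed


lemma lower:
  assumes ne: "nash_eq n M w s" and cvs: "\<forall>i<n. cv (w i)" and j: "j < n"
  shows "(w j (Suc (hrg_alloc n M s j)) - w j (hrg_alloc n M s j)) * real M
           \<le> (\<Sum>i<n. w i (hrg_alloc n M s i))"
proof -
  define A where "A = hrg_alloc n M s"
  define xj where "xj = A j"
  define d where "d = w j (Suc xj) - w j xj"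
  have cvj: "cv (w j)" using cvs j by simp
  have nn: "\<And>i. i < n \<Longrightarrow> 0 \<le> w i (A i)" using cvs cv_nonneg by blast
  have single: "w j (A j) \<le> (\<Sum>i<n. w i (A i))"
    using member_le_sum[of j "{..<n}" "\<lambda>i. w i (A i)"] nn j by simp
  have xjM: "xj \<le> M" using alloc_le[of n M s j] ne j
    unfolding nash_eq_def valid_request_def xj_def A_def by fastforce
  have ?thesis if "d \<le> 0"
  proof -
    have "0 \<le> (\<Sum>i<n. w i (A i))" using nn by (intro sum_nonneg) auto
    then show ?thesis using that unfolding d_def xj_def A_def
      by (smt (verit) of_nat_0_le_iff mult_nonpos_nonneg)
  qed
  moreover have ?thesis if "xj = M"
  proof -
    have "real xj * d \<le> w j xj" using cv_lower[OF cvj, of xj xj] by (simp add: d_def)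
    then show ?thesis using single that unfolding d_def xj_def A_def
      by (simp add: mult.commute)
  qed
  moreover have ?thesis if dpos: "d > 0" and xjl: "xj < M"
  proof -
    define r' where "r' = (Suc xj, w j (Suc xj))"
    define s' where "s' = s(j := r')"
    define B where "B = hrg_alloc n M s'"
    define \<kappa> where "\<kappa> = key s' j"
    define P where "P = {i. i < n \<and> i \<noteq> j \<and> key s i < \<kappa>}"
    define SP where "SP = (\<Sum>i\<in>P. fst (s i))"
    have finP: "finite P" unfolding P_def by simp
    have jP: "j \<notin> P" unfolding P_def by simp
    have valid: "valid_request M (w j) r'"
      using xjl cv_nonneg[OF cvj] unfolding valid_request_def r'_def by simp
    have dev: "w j (B j) \<le> w j xj"
      using ne j valid unfolding nash_eq_def B_def s'_def xj_def A_def by blast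
    have Bj: "B j \<le> xj"
    proof (rule ccontr)
      assume "\<not> B j \<le> xj"
      hence "w j (Suc xj) \<le> w j (B j)" using cv_mono[OF cvj] by simp
      then show False using dev dpos unfolding d_def by simp
    qed
    have keyeq: "\<And>i. i \<noteq> j \<Longrightarrow> key s' i = key s i" by (simp add: key_def s'_def)
    have dc1: "\<forall>a b. key s' a \<le> key s' b \<longrightarrow> key s' b < \<kappa> \<longrightarrow> key s' a < \<kappa>" by auto
    have dc2: "\<forall>a b. key s' a \<le> key s' b \<longrightarrow> key s' b \<le> \<kappa> \<longrightarrow> key s' a \<le> \<kappa>" by auto
    have set1: "{i. i < n \<and> key s' i < \<kappa>} = P"
      using keyeq unfolding P_def \<kappa>_def by auto (metis less_irrefl)
    have keyinj: "\<And>i. key s' i = \<kappa> \<Longrightarrow> i = j" unfolding \<kappa>_def key_def by simp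
    have set2: "{i. i < n \<and> key s' i \<le> \<kappa>} = insert j P"
      using keyeq j keyinj unfolding P_def \<kappa>_def
      by (auto simp: order.order_iff_strict)
    have fsP: "(\<Sum>i\<in>P. fst (s' i)) = SP" unfolding SP_def s'_def using jP
      by (intro sum.cong) auto
    have e1: "(\<Sum>i\<in>P. B i) = min M SP"
      using prefix_sum[OF dc1, of n M] set1 fsP unfolding B_def by simp
    have e2: "(\<Sum>i\<in>insert j P. B i) = min M (SP + Suc xj)"
      using prefix_sum[OF dc2, of n M] set2 fsP finP jP unfolding B_def
      by (simp add: s'_def r'_def)
    have "B j + min M SP = min M (SP + Suc xj)"
      using e1 e2 finP jP by simp
    hence key1: "M \<le> min M SP + xj" using Bj by linarith
    have cover: "M \<le> (\<Sum>i\<in>insert j P. A i)"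
    proof (cases "key s j < \<kappa>")
      case True
      have dc3: "\<forall>a b. key s a \<le> key s b \<longrightarrow> key s b < \<kappa> \<longrightarrow> key s a < \<kappa>" by auto
      have "{i. i < n \<and> key s i < \<kappa>} = insert j P" using True j unfolding P_def by auto
      hence "(\<Sum>i\<in>insert j P. A i) = min M (\<Sum>i\<in>insert j P. fst (s i))"
        using prefix_sum[OF dc3, of n M] unfolding A_def by simp
      also have "\<dots> = min M (fst (s j) + SP)" using finP jP by (simp add: SP_def)
      finally show ?thesis using alloc_le[of n M s j] key1 unfolding A_def xj_def by linarith
    next
      case False
      have dc3: "\<forall>a b. key s a \<le> key s b \<longrightarrow> key s b < \<kappa> \<longrightarrow> key s a < \<kappa>" by auto
      have "{i. i < n \<and> key s i < \<kappa>} = P" using False unfolding P_def by auto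
      hence "(\<Sum>i\<in>P. A i) = min M SP"
        using prefix_sum[OF dc3, of n M] unfolding A_def SP_def by simp
      then show ?thesis using finP jP key1 by (simp add: xj_def)
    qed
    have rho: "d \<le> ratio (s' j)"
    proof -
      have "real xj * d \<le> w j xj" using cv_lower[OF cvj, of xj xj] by (simp add: d_def)
      hence "real (Suc xj) * d \<le> w j (Suc xj)" by (simp add: d_def algebra_simps)
      then show ?thesis by (simp add: s'_def r'_def ratio_def pos_le_divide_eq mult.commute)
    qed
    have each: "d * real (A i) \<le> w i (A i)" if i: "i \<in> insert j P" for i
    proof (cases "i = j")
      case True
      then show ?thesis using cv_lower[OF cvj, of xj xj] by (simp add: d_def xj_def mult.commute)
    next
      case False
      hence iP: "i \<in> P" using i by simp
      hence in_: "i < n" and kl: "key s i < \<kappa>" unfolding P_def by auto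
      have "ratio (s' j) \<le> ratio (s i)" using kl unfolding \<kappa>_def key_def
        by (auto simp: less_prod_def)
      hence dr: "d \<le> ratio (s i)" using rho by linarith
      have vr: "snd (s i) \<le> w i (fst (s i))"
        using ne in_ unfolding nash_eq_def valid_request_def by blast
      have "d * real (fst (s i)) \<le> w i (fst (s i))"
      proof (cases "fst (s i) = 0")
        case True
        then show ?thesis using cv_nonneg cvs in_ by simp
      next
        case False
        have "d * real (fst (s i)) \<le> ratio (s i) * real (fst (s i))"
          using dr by (simp add: mult_right_mono)
        also have "\<dots> = snd (s i)" using False by (simp add: ratio_def)
        finally show ?thesis using vr by linarith
      qed
      then show ?thesis using cv_prop[of "w i" "A i" "fst (s i)" d] cvs in_ alloc_le[of n M s i]
        unfolding A_def by simp
    qed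
    have "d * real M \<le> d * real (\<Sum>i\<in>insert j P. A i)"
    proof -
      have "real M \<le> real (\<Sum>i\<in>insert j P. A i)" using cover by linarith
      then show ?thesis using dpos by (simp add: mult_left_mono)
    qed
    also have "\<dots> = (\<Sum>i\<in>insert j P. d * real (A i))" by (simp add: sum_distrib_left)
    also have "\<dots> \<le> (\<Sum>i\<in>insert j P. w i (A i))" using each by (rule sum_mono)
    also have "\<dots> \<le> (\<Sum>i<n. w i (A i))"
      using j nn by (intro sum_mono2) (auto simp: P_def)
    finally show ?thesis unfolding d_def xj_def A_def by (simp add: mult.commute)
  qed
  ultimately show ?thesis using xjM by (metis le_neq_implies_less not_less)
qed

lemma upper:
  assumes ne: "nash_eq n M w s" and cvs: "\<forall>i<n. cv (w i)" and n: "0 < n"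
  shows "(\<Sum>i<n. w i (hrg_alloc n M s i)) \<le> real M * Max ((\<lambda>i. w i 1) ` {..<n})"
proof -
  define D where "D = Max ((\<lambda>i. w i 1) ` {..<n})"
  have Dge: "\<And>i. i < n \<Longrightarrow> w i 1 \<le> D" unfolding D_def by (intro Max_ge) auto
  have D0: "0 \<le> D" using Dge[of 0] n cv_nonneg[of "w 0" 1] cvs by force
  have "(\<Sum>i<n. w i (hrg_alloc n M s i)) \<le> (\<Sum>i<n. real (hrg_alloc n M s i) * D)"
  proof (rule sum_mono)
    fix i assume "i \<in> {..<n}"
    hence i: "i < n" by simp
    have "w i (hrg_alloc n M s i) \<le> real (hrg_alloc n M s i) * w i 1"
      using cv_upper cvs i by blast
    also have "\<dots> \<le> real (hrg_alloc n M s i) * D" using Dge[OF i] by (simp add: mult_left_mono)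
    finally show "w i (hrg_alloc n M s i) \<le> real (hrg_alloc n M s i) * D" .
  qed
  also have "\<dots> = real (\<Sum>i<n. hrg_alloc n M s i) * D" by (simp add: sum_distrib_right)
  also have "\<dots> \<le> real M * D"
  proof -
    have "real (\<Sum>i<n. hrg_alloc n M s i) \<le> real M" using alloc_sum[of n M s] by linarith
    then show ?thesis using D0 by (rule mult_right_mono)
  qed
  finally show ?thesis unfolding D_def .
qed


theorem lemma1:
  fixes n m k :: nat and v :: "nat \<Rightarrow> nat \<Rightarrow> real" and mb :: "nat \<Rightarrow> nat"
    and S :: "nat \<Rightarrow> nat \<Rightarrow> request"
  assumes "0 < n"
    and "\<forall>i<n. valuation m (v i)"
    and "\<forall>t\<in>{1..k}. 0 < mb t"
    and "(\<Sum>t=1..k. mb t) = m"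
    and "myopic_eq n m k v mb S"
  shows "\<forall>t\<in>{1..k}.
           Delta n m v mb S t \<ge> sw_round n m v mb S t / real (mb t) \<and>
           sw_round n m v mb S t / real (mb t) \<ge> Delta n m v mb S (t + 1)"
proof
  fix t assume t: "t \<in> {1..k}"
  define w where "w = vmarg n m v mb S t"
  define M where "M = mb t"
  have M: "0 < M" using assms(3) t by (simp add: M_def)
  have ne: "nash_eq n M w (S t)" using assms(5) t by (simp add: myopic_eq_def M_def w_def)
  have cvs: "\<forall>i<n. cv (w i)"
  proof (intro allI impI)
    fix i assume i: "i < n"
    have "w i = (\<lambda>x. v i (min (x + alpha n mb S (t - 1) i) m) - v i (min (alpha n mb S (t - 1) i) m))"
      by (simp add: fun_eq_iff w_def vmarg_def vtrunc_def)
    then show "cv (w i)" using valuation_cv assms(2) i by simp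
  qed
  have sw: "sw_round n m v mb S t = (\<Sum>i<n. w i (hrg_alloc n M (S t) i))"
    by (simp add: sw_round_def w_def M_def X_def)
  have D1: "Delta n m v mb S t = Max ((\<lambda>i. w i 1) ` {..<n})"
    by (simp add: Delta_def w_def)
  have tt: "t = Suc (t - 1)" using t by simp
  have nxt: "vmarg n m v mb S (t + 1) i 1
        = w i (Suc (hrg_alloc n M (S t) i)) - w i (hrg_alloc n M (S t) i)" for i
  proof -
    have "alpha n mb S t i = alpha n mb S (t - 1) i + hrg_alloc n M (S t) i"
      using alpha.simps(2)[of n mb S "t - 1" i] tt by (simp add: X_def M_def)
    then show ?thesis by (simp add: vmarg_def w_def add.commute)
  qed
  have up: "sw_round n m v mb S t / real M \<le> Delta n m v mb S t"
    using upper[OF ne cvs assms(1)] M sw D1 by (simp add: divide_le_eq mult.commute)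
  have lo: "Delta n m v mb S (t + 1) \<le> sw_round n m v mb S t / real M"
    unfolding Delta_def
  proof (rule Max.boundedI)
    show "finite ((\<lambda>i. vmarg n m v mb S (t + 1) i 1) ` {..<n})" by simp
    show "(\<lambda>i. vmarg n m v mb S (t + 1) i 1) ` {..<n} \<noteq> {}" using assms(1) by auto
    fix a assume "a \<in> (\<lambda>i. vmarg n m v mb S (t + 1) i 1) ` {..<n}"
    then obtain i where i: "i < n" and a: "a = vmarg n m v mb S (t + 1) i 1" by auto
    show "a \<le> sw_round n m v mb S t / real M"
      using lower[OF ne cvs i] a nxt sw M by (simp add: le_divide_eq)
  qed
  show "Delta n m v mb S t \<ge> sw_round n m v mb S t / real (mb t) \<and>
           sw_round n m v mb S t / real (mb t) \<ge> Delta n m v mb S (t + 1)"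
    using up lo by (simp add: M_def)
qed

end
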